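(* Let $G$ be a connected finite simple graph on $n$ vertices. Then $\ell(G)=n-\omega(G)+1$ if and only if $G$ is a WL-graph.
   Context: $\ell(G)$ is the length (number of edges) of a longest induced path in $G$; $\omega(G)$ is the clique number of $G$ (maximum size of a set of pairwise adjacent vertices). WL-graph: a graph $G$ is a WL-graph if there exist positive integers $\ell,\omega$ with $\omega\ge2$ such that $G=P\cup K\cup H$ (union of graphs: union of vertex sets and of edge sets), where (i) $P$ is a path graph with consecutive vertices $v_0,v_1,\dots,v_\ell$; (ii) $K$ is a complete graph on the vertex set $\{v_t,v_{t+1},u_1,\dots,u_{\omega-2}\}$ for some $0\le t<\ell$, with $V(P)\cap V(K)=\{v_t,v_{t+1}\}$; (iii) $H$ is a graph with vertex set $V(P)\cup V(K)$ and edge set contained in $\{\{v_i,u_j\}:0\le i\le\ell,\ 1\le j\le\omega-2\}$. *)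

theory Defs
  imports Main
begin

definition simple_graph :: "'a set \<Rightarrow> 'a set set \<Rightarrow> bool" where
  "simple_graph V E \<longleftrightarrow> finite V \<and>
     (\<forall>e\<in>E. \<exists>x y. e = {x, y} \<and> x \<noteq> y \<and> x \<in> V \<and> y \<in> V)"

definition adj :: "'a set set \<Rightarrow> 'a \<Rightarrow> 'a \<Rightarrow> bool" where
  "adj E x y \<longleftrightarrow> {x, y} \<in> E"

definition connected_graph :: "'a set \<Rightarrow> 'a set set \<Rightarrow> bool" where
  "connected_graph V E \<longleftrightarrow> V \<noteq> {} \<and> (\<forall>x\<in>V. \<forall>y\<in>V. (adj E)\<^sup>*\<^sup>* x y)"

definition induced_path :: "'a set \<Rightarrow> 'a set set \<Rightarrow> 'a list \<Rightarrow> bool" where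
  "induced_path V E xs \<longleftrightarrow> xs \<noteq> [] \<and> distinct xs \<and> set xs \<subseteq> V \<and>
     (\<forall>i j. i < length xs \<and> j < length xs \<longrightarrow>
        (adj E (xs ! i) (xs ! j) \<longleftrightarrow> (i = j + 1 \<or> j = i + 1)))"

definition longest_induced_path :: "'a set \<Rightarrow> 'a set set \<Rightarrow> nat" where
  "longest_induced_path V E = Max {length xs - 1 | xs. induced_path V E xs}"

definition clique :: "'a set \<Rightarrow> 'a set set \<Rightarrow> 'a set \<Rightarrow> bool" where
  "clique V E S \<longleftrightarrow> S \<subseteq> V \<and> (\<forall>x\<in>S. \<forall>y\<in>S. x \<noteq> y \<longrightarrow> adj E x y)"

definition clique_number :: "'a set \<Rightarrow> 'a set set \<Rightarrow> nat" where
  "clique_number V E = Max {card S | S. clique V E S}"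

definition WL_graph :: "'a set \<Rightarrow> 'a set set \<Rightarrow> bool" where
  "WL_graph V E \<longleftrightarrow>
    (\<exists>(l::nat) (w::nat) (t::nat) (v::nat \<Rightarrow> 'a) (u::nat \<Rightarrow> 'a) H.
       1 \<le> l \<and> 2 \<le> w \<and> t < l \<and>
       inj_on v {0..l} \<and> inj_on u {1..w-2} \<and>
       v ` {0..l} \<inter> u ` {1..w-2} = {} \<and>
       V = v ` {0..l} \<union> u ` {1..w-2} \<and>
       H \<subseteq> {{v i, u j} | i j. i \<le> l \<and> 1 \<le> j \<and> j \<le> w - 2} \<and>
       E = {{v i, v (i + 1)} | i. i < l}
           \<union> {{x, y} | x y. x \<in> {v t, v (t + 1)} \<union> u ` {1..w-2} \<and>
                             y \<in> {v t, v (t + 1)} \<union> u ` {1..w-2} \<and> x \<noteq> y}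
           \<union> H)"

end

theory Submission
  imports Defs
begin


lemma adj_sym: "adj E x y = adj E y x" by (simp add: adj_def insert_commute)

lemma no_loop: "simple_graph V E \<Longrightarrow> \<not> adj E x x"
  unfolding simple_graph_def adj_def by (metis doubleton_eq_iff)

lemma card_le2:
  assumes "\<And>x y z. x \<in> A \<Longrightarrow> y \<in> A \<Longrightarrow> z \<in> A \<Longrightarrow> x \<noteq> y \<Longrightarrow> y \<noteq> z \<Longrightarrow> x \<noteq> z \<Longrightarrow> False"
  shows "card A \<le> 2"
proof (cases "A = {}")
  case True then show ?thesis by simp
next
  case False
  then obtain x where x: "x \<in> A" by blast
  show ?thesis
  proof (cases "A \<subseteq> {x}")
    case True then show ?thesis
      by (metis card.empty card.insert empty_iff finite.intros(1) le_SucI numeral_2_eq_2 subset_singletonD card_mono finite.emptyI le_refl)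
  next
    case False
    then obtain y where y: "y \<in> A" "y \<noteq> x" by blast
    have "A \<subseteq> {x, y}" using assms x y by blast
    then have "card A \<le> card {x, y}" by (intro card_mono) auto
    also have "\<dots> \<le> 2" by (simp add: card_insert_if)
    finally show ?thesis .
  qed
qed

lemma ip_adj: "induced_path V E xs \<Longrightarrow> i < length xs \<Longrightarrow> j < length xs \<Longrightarrow>
   adj E (xs!i) (xs!j) \<longleftrightarrow> (i = j+1 \<or> j = i+1)"
  unfolding induced_path_def by blast

lemma path_clique:
  assumes p: "induced_path V E xs" and c: "clique V E S"
  shows "card (set xs \<inter> S) \<le> 2"
proof (rule card_le2)
  fix x y z assume "x \<in> set xs \<inter> S" "y \<in> set xs \<inter> S" "z \<in> set xs \<inter> S"
    and d: "x \<noteq> y" "y \<noteq> z" "x \<noteq> z"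
  then obtain i j k where "i < length xs" "j < length xs" "k < length xs"
    "xs!i = x" "xs!j = y" "xs!k = z" "x \<in> S" "y \<in> S" "z \<in> S"
    by (auto simp: in_set_conv_nth)
  moreover have "adj E x y" "adj E y z" "adj E x z" using c d calculation unfolding clique_def by auto
  ultimately have "i = j+1 \<or> j = i+1" "j = k+1 \<or> k = j+1" "i = k+1 \<or> k = i+1"
    using ip_adj[OF p] by metis+
  then show False by presburger
qed

lemma ip_len: 
  assumes s: "simple_graph V E" and p: "induced_path V E xs" and c: "clique V E S"
  shows "length xs + card S \<le> card V + 2"
proof -
  have fV: "finite V" using s simple_graph_def by auto
  have sub: "set xs \<subseteq> V" "S \<subseteq> V" using p c unfolding induced_path_def clique_def by auto
  have "length xs = card (set xs)" using p induced_path_def distinct_card by metis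
  also have "\<dots> = card ((set xs - S) \<union> (set xs \<inter> S))" by (simp add: Un_Diff_Int)
  also have "\<dots> = card (set xs - S) + card (set xs \<inter> S)" by (rule card_Un_disjoint) auto
  also have "\<dots> \<le> card (V - S) + 2"
  proof -
    have "card (set xs - S) \<le> card (V - S)" using fV sub by (intro card_mono) auto
    then show ?thesis using path_clique[OF p c] by linarith
  qed
  also have "card (V - S) = card V - card S" using card_Diff_subset[of S V] sub fV finite_subset by blast
  finally show ?thesis using card_mono[OF fV sub(2)] by linarith
qed



lemma basic_facts:
  assumes s: "simple_graph V E" and c: "connected_graph V E"
  shows "\<exists>xs. induced_path V E xs \<and> longest_induced_path V E = length xs - 1"
    "\<And>xs. induced_path V E xs \<Longrightarrow> length xs - 1 \<le> longest_induced_path V E"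
    "\<exists>S. clique V E S \<and> clique_number V E = card S"
    "\<And>S. clique V E S \<Longrightarrow> card S \<le> clique_number V E"
proof -
  have fV: "finite V" using s simple_graph_def by auto
  obtain x0 where x0: "x0 \<in> V" using c unfolding connected_graph_def by auto
  have lenle: "length xs \<le> card V" if "induced_path V E xs" for xs
    using that unfolding induced_path_def by (metis card_mono distinct_card fV)
  let ?P = "{length xs - 1 | xs. induced_path V E xs}"
  have fP: "finite ?P" by (rule finite_subset[of _ "{0..card V}"]) (auto dest: lenle)
  have "induced_path V E [x0]" using x0 no_loop[OF s] unfolding induced_path_def by auto
  then have neP: "?P \<noteq> {}" by blast
  show "\<exists>xs. induced_path V E xs \<and> longest_induced_path V E = length xs - 1"
    using Max_in[OF fP neP] unfolding longest_induced_path_def by auto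
  show "\<And>xs. induced_path V E xs \<Longrightarrow> length xs - 1 \<le> longest_induced_path V E"
    using Max_ge[OF fP] unfolding longest_induced_path_def by auto
  let ?C = "{card S | S. clique V E S}"
  have cle: "card S \<le> card V" if "clique V E S" for S
    using that unfolding clique_def by (simp add: card_mono fV)
  have fC: "finite ?C" by (rule finite_subset[of _ "{0..card V}"]) (auto dest: cle)
  have "clique V E {}" unfolding clique_def by auto
  then have neC: "?C \<noteq> {}" by blast
  show "\<exists>S. clique V E S \<and> clique_number V E = card S"
    using Max_in[OF fC neC] unfolding clique_number_def by auto
  show "\<And>S. clique V E S \<Longrightarrow> card S \<le> clique_number V E"
    using Max_ge[OF fC] unfolding clique_number_def by auto
qed



lemma wl_facts:
  assumes s: "simple_graph V E" and wl: "WL_graph V E"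
  shows "\<exists>l w xs S. 1 \<le> l \<and> 2 \<le> w \<and> induced_path V E xs \<and> length xs = l + 1 \<and> clique V E S \<and> card S = w
     \<and> card V = l + 1 + (w - 2)"
proof -
  obtain l w t :: nat and v u :: "nat \<Rightarrow> 'a" and H where l1: "1 \<le> l" and w2: "2 \<le> w" and tl: "t < l"
    and iv: "inj_on v {0..l}" and iu: "inj_on u {1..w-2}"
    and dj: "v ` {0..l} \<inter> u ` {1..w-2} = {}"
    and VV: "V = v ` {0..l} \<union> u ` {1..w-2}"
    and HH: "H \<subseteq> {{v i, u j} | i j. i \<le> l \<and> 1 \<le> j \<and> j \<le> w - 2}"
    and EE: "E = {{v i, v (i + 1)} | i. i < l}
           \<union> {{x, y} | x y. x \<in> {v t, v (t + 1)} \<union> u ` {1..w-2} \<and>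
                             y \<in> {v t, v (t + 1)} \<union> u ` {1..w-2} \<and> x \<noteq> y}
           \<union> H"
    using wl unfolding WL_graph_def by (elim exE conjE) (rule that; assumption)
  define U where "U = u ` {1..w-2}"
  have vinj: "v i = v j \<longleftrightarrow> i = j" if "i \<le> l" "j \<le> l" for i j
    using iv that by (auto dest: inj_onD)
  have vU: "v i \<notin> U" if "i \<le> l" for i using dj that unfolding U_def by (metis atLeastAtMost_iff disjoint_iff imageI le0)
  have adjv: "adj E (v i) (v j) \<longleftrightarrow> (i = j + 1 \<or> j = i + 1)" if ij: "i \<le> l" "j \<le> l" for i j
  proof
    assume "adj E (v i) (v j)"
    then have e: "{v i, v j} \<in> E" unfolding adj_def .
    show "i = j + 1 \<or> j = i + 1"
    proof -
      consider (a) k where "k < l" "{v i, v j} = {v k, v (k+1)}"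
        | (b) x y where "{v i, v j} = {x, y}" "x \<in> {v t, v (t + 1)} \<union> U" "y \<in> {v t, v (t + 1)} \<union> U" "x \<noteq> y"
        | (c) "{v i, v j} \<in> H"
        using e unfolding EE U_def by blast
      then show ?thesis
      proof cases
        case (a k)
        then show ?thesis using vinj ij by (auto simp: doubleton_eq_iff)
      next
        case (b x y)
        have "v i \<noteq> v j" using b by (metis doubleton_eq_iff)
        then have "i \<noteq> j" by auto
        moreover have "v i \<in> {v t, v (t+1)}" "v j \<in> {v t, v (t+1)}" using b vU ij by (auto simp: doubleton_eq_iff)
        then have "i \<in> {t, t+1}" "j \<in> {t, t+1}" using vinj ij tl by auto
        ultimately show ?thesis by auto
      next
        case c
        then obtain a b where "{v i, v j} = {v a, u b}" "1 \<le> b" "b \<le> w - 2" using HH by blast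
        then have "u b \<in> {v i, v j}" "u b \<in> U" unfolding U_def by auto
        then show ?thesis using vU ij by auto
      qed
    qed
  next
    assume "i = j + 1 \<or> j = i + 1"
    then obtain k where k: "k < l" "{v i, v j} = {v k, v (k+1)}"
    proof
      assume "i = j + 1" then show thesis using that[of j] ij by (auto simp: insert_commute)
    next
      assume "j = i + 1" then show thesis using that[of i] ij by auto
    qed
    then have "{v i, v j} \<in> {{v i, v (i + 1)} | i. i < l}" by blast
    then show "adj E (v i) (v j)" unfolding adj_def EE by blast
  qed
  define xs where "xs = map v [0..<Suc l]"
  have xsn: "xs ! i = v i" if "i \<le> l" for i using that unfolding xs_def
    by (simp del: upt_Suc add: nth_map)
  have setxs: "set xs = v ` {0..l}" unfolding xs_def by (simp add: atLeastLessThanSuc_atLeastAtMost del: upt_Suc)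
  have ip: "induced_path V E xs"
    unfolding induced_path_def
  proof (intro conjI allI impI)
    show "xs \<noteq> []" unfolding xs_def by simp
    show "distinct xs" unfolding xs_def using iv
      by (simp add: distinct_map atLeastLessThanSuc_atLeastAtMost del: upt_Suc)
    show "set xs \<subseteq> V" using setxs VV by auto
    fix i j assume "i < length xs \<and> j < length xs"
    then have "i \<le> l" "j \<le> l" unfolding xs_def by auto
    then show "adj E (xs ! i) (xs ! j) = (i = j + 1 \<or> j = i + 1)" using adjv xsn by auto
  qed
  have lxs: "length xs = l + 1" unfolding xs_def by simp
  define S where "S = {v t, v (t + 1)} \<union> U"
  have cl: "clique V E S" unfolding clique_def S_def
  proof (intro conjI ballI impI)
    show "{v t, v (t + 1)} \<union> U \<subseteq> V" using VV tl U_def by auto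
    fix x y assume "x \<in> {v t, v (t + 1)} \<union> U" "y \<in> {v t, v (t + 1)} \<union> U" "x \<noteq> y"
    then show "adj E x y" unfolding adj_def EE U_def by blast
  qed
  have cU: "card U = w - 2" unfolding U_def using iu by (simp add: card_image)
  have "v t \<noteq> v (t+1)" using vinj tl by simp
  moreover have "v t \<notin> U" "v (t+1) \<notin> U" using vU tl by auto
  ultimately have cS: "card S = w" unfolding S_def using cU w2
    by (simp add: U_def card_insert_if finite_imageI)
  have "card V = card (v ` {0..l}) + card U" unfolding VV U_def
    by (rule card_Un_disjoint) (use dj in auto)
  also have "card (v ` {0..l}) = l + 1" using iv by (simp add: card_image)
  finally have "card V = l + 1 + (w - 2)" using cU by simp
  then show ?thesis using ip lxs cl cS w2 l1 by blast
qed



lemma to_wl: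
  assumes s: "simple_graph V E" and ip: "induced_path V E xs" and cl: "clique V E S"
    and eq: "length xs = card V - card S + 2" and SV: "card S \<le> card V"
  shows "WL_graph V E"
proof -
  have fV: "finite V" using s simple_graph_def by auto
  have sub: "set xs \<subseteq> V" "S \<subseteq> V" using ip cl unfolding induced_path_def clique_def by auto
  have dxs: "distinct xs" using ip unfolding induced_path_def by auto
  have fS: "finite S" using fV sub finite_subset by blast
  define w where "w = card S"
  define l where "l = length xs - 1"
  have lenV: "length xs \<le> card V" using dxs sub fV by (metis card_mono distinct_card)
  have w2: "2 \<le> w" unfolding w_def using lenV eq SV by linarith
  have l1: "length xs = l + 1" unfolding l_def using eq by simp
  have c1: "card (set xs) = card (set xs - S) + card (set xs \<inter> S)"
  proof -
    have "card (set xs) = card ((set xs - S) \<union> (set xs \<inter> S))" by (simp add: Un_Diff_Int)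
    also have "\<dots> = card (set xs - S) + card (set xs \<inter> S)" by (rule card_Un_disjoint) auto
    finally show ?thesis .
  qed
  have c2: "card (set xs - S) \<le> card (V - S)" using fV sub by (intro card_mono) auto
  have c3: "card (V - S) = card V - card S" using card_Diff_subset[of S V] sub fS by blast
  have c4: "card (set xs \<inter> S) \<le> 2" using path_clique[OF ip cl] .
  have cx: "card (set xs) = length xs" using dxs distinct_card by blast
  have e1: "card (set xs - S) = card (V - S)" and e2: "card (set xs \<inter> S) = 2"
    using c1 c2 c3 c4 cx eq by linarith+
  have xsS: "set xs - S = V - S"
    by (rule card_subset_eq) (use fV sub e1 in auto)
  obtain a b where ab: "set xs \<inter> S = {a, b}" "a \<noteq> b" using e2 card_2_iff by metis
  then obtain ia ib where iab: "ia < length xs" "ib < length xs" "xs!ia = a" "xs!ib = b"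
    by (metis Int_iff insertCI in_set_conv_nth)
  have "a \<in> S" "b \<in> S" using ab by auto
  then have "adj E a b" using cl ab unfolding clique_def by auto
  then have "ia = ib + 1 \<or> ib = ia + 1" using ip_adj[OF ip] iab by metis
  then have "\<exists>t. t + 1 < length xs \<and> set xs \<inter> S = {xs!t, xs!(t+1)}"
  proof
    assume h: "ia = ib + 1"
    show ?thesis by (rule exI[of _ ib]) (use h iab ab in \<open>auto simp: insert_commute\<close>)
  next
    assume h: "ib = ia + 1"
    show ?thesis by (rule exI[of _ ia]) (use h iab ab in auto)
  qed
  then obtain t where t: "t + 1 < length xs" "set xs \<inter> S = {xs!t, xs!(t+1)}" by blast
  have tl: "t < l" using t l1 by simp
  define v where "v = (\<lambda>i. xs ! i)"
  define R where "R = S - set xs"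
  have fR: "finite R" unfolding R_def using fS by auto
  have cR: "card R = w - 2"
  proof -
    have "card R = card S - card (S \<inter> set xs)" unfolding R_def
      by (rule card_Diff_subset_Int) (use fS in auto)
    also have "S \<inter> set xs = set xs \<inter> S" by blast
    finally show ?thesis using e2 w_def by simp
  qed
  obtain u where bu: "bij_betw u {1..card R} R" using ex_bij_betw_nat_finite_1[OF fR] by blast
  have iu: "inj_on u {1..w-2}" and uR: "u ` {1..w-2} = R" using bu cR unfolding bij_betw_def by auto
  have iv: "inj_on v {0..l}" unfolding v_def
    by (rule inj_on_nth[OF dxs]) (use l1 in auto)
  have vset: "v ` {0..l} = set xs"
  proof
    show "v ` {0..l} \<subseteq> set xs" unfolding v_def using l1 by auto
    show "set xs \<subseteq> v ` {0..l}"
    proof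
      fix x assume "x \<in> set xs"
      then obtain i where "i < length xs" "x = xs ! i" by (metis in_set_conv_nth)
      then show "x \<in> v ` {0..l}" unfolding v_def using l1 by auto
    qed
  qed
  have dj: "v ` {0..l} \<inter> u ` {1..w-2} = {}" using vset uR R_def by auto
  have VR0: "V = set xs \<union> R" unfolding R_def using xsS sub by blast
  have VV: "V = v ` {0..l} \<union> u ` {1..w-2}" using VR0 vset uR by simp
  have vt: "{v t, v (t + 1)} = set xs \<inter> S" using t v_def by simp
  have KS: "{v t, v (t + 1)} \<union> u ` {1..w-2} = S" unfolding vt uR R_def by blast
  define H where "H = {e \<in> E. \<exists>i j. e = {v i, u j} \<and> i \<le> l \<and> 1 \<le> j \<and> j \<le> w - 2}"
  have HH: "H \<subseteq> {{v i, u j} | i j. i \<le> l \<and> 1 \<le> j \<and> j \<le> w - 2}" unfolding H_def by blast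
  have EE: "E = {{v i, v (i + 1)} | i. i < l}
           \<union> {{x, y} | x y. x \<in> {v t, v (t + 1)} \<union> u ` {1..w-2} \<and>
                             y \<in> {v t, v (t + 1)} \<union> u ` {1..w-2} \<and> x \<noteq> y}
           \<union> H" (is "E = ?P \<union> ?K \<union> H")
  proof
    show "?P \<union> ?K \<union> H \<subseteq> E"
    proof -
      have "?P \<subseteq> E"
      proof
        fix e assume "e \<in> ?P"
        then obtain i where "i < l" "e = {v i, v (i+1)}" by blast
        then show "e \<in> E" using ip_adj[OF ip, of i "i+1"] l1 unfolding v_def adj_def by auto
      qed
      moreover have "?K \<subseteq> E" unfolding KS using cl unfolding clique_def adj_def by blast
      moreover have "H \<subseteq> E" unfolding H_def by blast
      ultimately show ?thesis by blast
    qed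
  next
    show "E \<subseteq> ?P \<union> ?K \<union> H"
    proof
      fix e assume eE: "e \<in> E"
      then obtain x y where xy: "e = {x, y}" "x \<noteq> y" "x \<in> V" "y \<in> V"
        using s unfolding simple_graph_def by blast
      have axy: "adj E x y" using eE xy unfolding adj_def by simp
      have VR: "V = set xs \<union> R" using VV vset uR by simp
      have RS: "R \<subseteq> S" "R \<inter> set xs = {}" unfolding R_def by auto
      show "e \<in> ?P \<union> ?K \<union> H"
      proof (cases "x \<in> set xs \<and> y \<in> set xs")
        case True
        then obtain i j where ij: "i < length xs" "j < length xs" "x = v i" "y = v j"
          unfolding v_def by (metis in_set_conv_nth)
        then have "i = j + 1 \<or> j = i + 1" using ip_adj[OF ip] axy unfolding v_def by metis
        then obtain k where k: "k < l" "e = {v k, v (k+1)}"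
        proof
          assume "i = j + 1" then show thesis using that[of j] ij xy l1 by (auto simp: insert_commute)
        next
          assume "j = i + 1" then show thesis using that[of i] ij xy l1 by auto
        qed
        then have "e \<in> ?P" by blast
        then show ?thesis by blast
      next
        case False
        show ?thesis
        proof (cases "x \<in> S \<and> y \<in> S")
          case True
          then have "e \<in> ?K" unfolding KS using xy by blast
          then show ?thesis by blast
        next
          case False2: False
          have "\<exists>p q. e = {p, q} \<and> p \<in> set xs \<and> q \<in> R"
          proof (cases "x \<in> set xs")
            case True
            then have "y \<in> R" using False VR xy by blast
            then show ?thesis using True xy by blast
          next
            case False3: False
            then have "x \<in> R" using VR xy by blast
            then have "y \<notin> S" using False2 RS by blast
            then have "y \<in> set xs" using VR RS xy by blast
            then show ?thesis using \<open>x \<in> R\<close> xy by (metis insert_commute)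
          qed
          then obtain p q where pq: "e = {p, q}" "p \<in> set xs" "q \<in> R" by blast
          obtain i where "p = v i" "i \<le> l" using pq(2) unfolding vset[symmetric] by auto
          moreover obtain j where "q = u j" "1 \<le> j" "j \<le> w - 2" using pq(3) unfolding uR[symmetric] by auto
          ultimately have "e \<in> H" unfolding H_def using pq eE by blast
          then show ?thesis by blast
        qed
      qed
    qed
  qed
  have "1 \<le> l" using eq SV unfolding l_def w_def by linarith
  show ?thesis unfolding WL_graph_def
    apply (rule exI[of _ l], rule exI[of _ w], rule exI[of _ t], rule exI[of _ v], rule exI[of _ u], rule exI[of _ H])
    apply (intro conjI)
    apply (fact \<open>1 \<le> l\<close> w2 tl iv iu dj VV HH EE)+
    done
qed

theorem theorem3p3:
  fixes V :: "'a set" and E :: "'a set set"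
  assumes "simple_graph V E" and "connected_graph V E"
  shows "longest_induced_path V E = card V - clique_number V E + 1 \<longleftrightarrow> WL_graph V E"
proof -
  note s = assms(1) and c = assms(2)
  note bf = basic_facts[OF s c]
  have fV: "finite V" using s simple_graph_def by auto
  have ne: "xs \<noteq> []" if "induced_path V E xs" for xs using that induced_path_def by auto
  have cV: "card S \<le> card V" if "clique V E S" for S
    using that unfolding clique_def by (simp add: card_mono fV)
  obtain xs where ip: "induced_path V E xs" and lx: "longest_induced_path V E = length xs - 1"
    using bf(1) by blast
  obtain S where cl: "clique V E S" and cs: "clique_number V E = card S" using bf(3) by blast
  have bound: "length xs + card S \<le> card V + 2" using ip_len[OF s ip cl] .
  have xne: "xs \<noteq> []" using ne[OF ip] .
  have SV: "card S \<le> card V" using cV[OF cl] .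
  show ?thesis
  proof
    assume h: "longest_induced_path V E = card V - clique_number V E + 1"
    have "length xs \<ge> 1" using xne by (simp add: Suc_leI)
    then have "length xs = card V - card S + 2" using h lx cs SV by linarith
    then show "WL_graph V E" by (rule to_wl[OF s ip cl _ SV])
  next
    assume "WL_graph V E"
    then obtain l w :: nat and xs0 S0 where l1: "1 \<le> l" and w2: "2 \<le> w" and ip0: "induced_path V E xs0" and l0: "length xs0 = l + 1"
      and cl0: "clique V E S0" and c0: "card S0 = w" and n0: "card V = l + 1 + (w - 2)"
      using wl_facts[OF s] by blast
    have "l \<le> longest_induced_path V E" using bf(2)[OF ip0] l0 by simp
    moreover have "w \<le> clique_number V E" using bf(4)[OF cl0] c0 by simp
    moreover have "length xs \<ge> 1" using xne by (simp add: Suc_leI)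
    moreover have "length xs - 1 + 1 = length xs" using xne by simp
    moreover have "card V + 1 = l + w" using n0 w2 by simp
    ultimately have "longest_induced_path V E = l" "clique_number V E = w"
      using lx cs bound by linarith+
    then show "longest_induced_path V E = card V - clique_number V E + 1"
      using n0 w2 l1 by simp
  qed
qed

end
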